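(* Let $N=(a_1,\dots,a_s)\in\mathbb{N}_0^s$ be an $s$-tuple of non-negative integers, and for an integer $b\ge 0$ let $N+b=(a_1,\dots,a_s,b)$. For every tuple $M$ write $n_j(M)=\#\{a\in M\mid a\le j\}$ (counted with multiplicity) and $p(M)=\max\{j\mid \sum_{a\in M,\,a\le j}(j+1-a)\le j\}$, assumed to exist. Then: (a) $p(N+b)\le p(N)$ for every integer $b\ge 0$; (b) if $p=p(N)\ge 2$, $n_{p-1}(N)=0$ and $n_p(N)\le 1$, then $p(N+b)=p$ for every integer $b\ge 2$.
   Context: Sums over empty index sets are zero; entries of tuples are counted with multiplicity. *)

theory Defs
  imports Main
begin

(* A tuple N = (a_1,...,a_s) of non-negative integers is a list of naturals;
   N + b is N @ [b]. Entries are counted with multiplicity. *)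

definition n_le :: "nat list \<Rightarrow> nat \<Rightarrow> nat" where
  "n_le M j = length (filter (\<lambda>a. a \<le> j) M)"

definition defect :: "nat list \<Rightarrow> nat \<Rightarrow> nat" where
  "defect M j = sum_list (map (\<lambda>a. j + 1 - a) (filter (\<lambda>a. a \<le> j) M))"

definition Pset :: "nat list \<Rightarrow> nat set" where
  "Pset M = {j. defect M j \<le> j}"

(* p(M) exists: the set is nonempty and bounded above *)
definition p_exists :: "nat list \<Rightarrow> bool" where
  "p_exists M \<longleftrightarrow> Pset M \<noteq> {} \<and> finite (Pset M)"

definition pM :: "nat list \<Rightarrow> nat" where
  "pM M = Max (Pset M)"

end

theory Submission
  imports Defs
begin

lemma defect_snoc: "defect (N @ [b]) j = defect N j + (if b \<le> j then j + 1 - b else 0)"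
  by (simp add: defect_def)

lemma Pset_snoc: "Pset (N @ [b]) \<subseteq> Pset N"
  by (auto simp: Pset_def defect_snoc)

lemma sum_le_len: "(\<forall>x\<in>set xs. f x \<le> (1::nat)) \<Longrightarrow> sum_list (map f xs) \<le> length xs"
  by (induction xs) auto

lemma partA: "p_exists N \<Longrightarrow> p_exists (N @ [b]) \<Longrightarrow> pM (N @ [b]) \<le> pM N"
  unfolding p_exists_def pM_def
  using Pset_snoc[of N b]
  by (meson Max_mono)

theorem lemma4p7:
  fixes N :: "nat list"
  shows "(\<forall>b::nat. p_exists N \<and> p_exists (N @ [b]) \<longrightarrow> pM (N @ [b]) \<le> pM N)
       \<and> (p_exists N \<and> pM N \<ge> 2 \<and> n_le N (pM N - 1) = 0 \<and> n_le N (pM N) \<le> 1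
          \<longrightarrow> (\<forall>b::nat. b \<ge> 2 \<longrightarrow> p_exists (N @ [b]) \<and> pM (N @ [b]) = pM N))"
proof (intro conjI allI impI)
  fix b assume "p_exists N \<and> p_exists (N @ [b])"
  then show "pM (N @ [b]) \<le> pM N" using partA by blast
next
  fix b :: nat
  assume H: "p_exists N \<and> pM N \<ge> 2 \<and> n_le N (pM N - 1) = 0 \<and> n_le N (pM N) \<le> 1"
    and b: "b \<ge> 2"
  define p where "p = pM N"
  have ex: "p_exists N" and p2: "p \<ge> 2" and n1: "n_le N (p - 1) = 0" and n2: "n_le N p \<le> 1"
    using H by (auto simp: p_def)
  have big: "\<forall>a\<in>set N. \<not> a \<le> p - 1"
    using n1 by (simp add: n_le_def filter_empty_conv)
  have "defect N p \<le> length (filter (\<lambda>a. a \<le> p) N)"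
    unfolding defect_def
    by (rule sum_le_len) (use big in auto)
  then have dN: "defect N p \<le> 1" using n2 by (simp add: n_le_def)
  have "defect (N @ [b]) p \<le> p"
    using dN b p2 by (simp add: defect_snoc) arith
  then have pin: "p \<in> Pset (N @ [b])" by (simp add: Pset_def)
  have fin: "finite (Pset (N @ [b]))"
    using ex Pset_snoc[of N b] finite_subset unfolding p_exists_def by blast
  have ex2: "p_exists (N @ [b])" using pin fin unfolding p_exists_def by blast
  have "p \<le> pM (N @ [b])" using pin fin unfolding pM_def by simp
  moreover have "pM (N @ [b]) \<le> p" using partA[OF ex ex2] p_def by simp
  ultimately show "pM (N @ [b]) = pM N" using p_def by simp
  show "p_exists (N @ [b])" by (rule ex2)
qed

end
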